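(* Let $G$ be an $\alpha_i$-metric graph ($i\ge 0$ an integer) and $k$ a positive integer. Then for every vertex $v$ of $G$ with $e(v)\le rad(G)+k$, $d(v,C(G))\le k+i$.
   Context: All graphs are finite, connected, unweighted, undirected, simple; $d(u,v)$ is the shortest-path distance and $d(v,S)=\min_{s\in S}d(v,s)$. $I(u,v)=\{x: d(u,x)+d(x,v)=d(u,v)\}$. A graph is $\alpha_i$-metric if for all vertices $u,v,w,x$: whenever $v\in I(u,w)$, $w\in I(v,x)$ and $v,w$ are adjacent, then $d(u,x)\ge d(u,v)+d(v,x)-i$. $e(v)=\max_u d(u,v)$, $rad(G)=\min_v e(v)$, $C(G)=\{v:e(v)=rad(G)\}$. *)

theory Defs
  imports Main
begin

definition simple_graph :: "'a set \<Rightarrow> ('a \<Rightarrow> 'a \<Rightarrow> bool) \<Rightarrow> bool" where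
  "simple_graph V E \<longleftrightarrow> finite V \<and> V \<noteq> {} \<and>
     (\<forall>x y. E x y \<longrightarrow> x \<in> V \<and> y \<in> V) \<and>
     (\<forall>x y. E x y \<longrightarrow> E y x) \<and> (\<forall>x. \<not> E x x)"

definition walk :: "'a set \<Rightarrow> ('a \<Rightarrow> 'a \<Rightarrow> bool) \<Rightarrow> 'a list \<Rightarrow> bool" where
  "walk V E p \<longleftrightarrow> p \<noteq> [] \<and> set p \<subseteq> V \<and>
     (\<forall>j. Suc j < length p \<longrightarrow> E (p ! j) (p ! Suc j))"

definition connected_graph :: "'a set \<Rightarrow> ('a \<Rightarrow> 'a \<Rightarrow> bool) \<Rightarrow> bool" where
  "connected_graph V E \<longleftrightarrow>
     (\<forall>u\<in>V. \<forall>v\<in>V. \<exists>p. walk V E p \<and> hd p = u \<and> last p = v)"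

definition dist :: "'a set \<Rightarrow> ('a \<Rightarrow> 'a \<Rightarrow> bool) \<Rightarrow> 'a \<Rightarrow> 'a \<Rightarrow> nat" where
  "dist V E u v = (LEAST n. \<exists>p. walk V E p \<and> hd p = u \<and> last p = v \<and> length p = Suc n)"

definition interval :: "'a set \<Rightarrow> ('a \<Rightarrow> 'a \<Rightarrow> bool) \<Rightarrow> 'a \<Rightarrow> 'a \<Rightarrow> 'a set" where
  "interval V E u v = {x \<in> V. dist V E u x + dist V E x v = dist V E u v}"

definition alpha_metric :: "nat \<Rightarrow> 'a set \<Rightarrow> ('a \<Rightarrow> 'a \<Rightarrow> bool) \<Rightarrow> bool" where
  "alpha_metric i V E \<longleftrightarrow>
     (\<forall>u\<in>V. \<forall>v\<in>V. \<forall>w\<in>V. \<forall>x\<in>V.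
        v \<in> interval V E u w \<and> w \<in> interval V E v x \<and> E v w \<longrightarrow>
        int (dist V E u x) \<ge> int (dist V E u v) + int (dist V E v x) - int i)"

definition ecc :: "'a set \<Rightarrow> ('a \<Rightarrow> 'a \<Rightarrow> bool) \<Rightarrow> 'a \<Rightarrow> nat" where
  "ecc V E v = Max ((\<lambda>u. dist V E u v) ` V)"

definition rad :: "'a set \<Rightarrow> ('a \<Rightarrow> 'a \<Rightarrow> bool) \<Rightarrow> nat" where
  "rad V E = Min (ecc V E ` V)"

definition center :: "'a set \<Rightarrow> ('a \<Rightarrow> 'a \<Rightarrow> bool) \<Rightarrow> 'a set" where
  "center V E = {v \<in> V. ecc V E v = rad V E}"

definition dist_set :: "'a set \<Rightarrow> ('a \<Rightarrow> 'a \<Rightarrow> bool) \<Rightarrow> 'a \<Rightarrow> 'a set \<Rightarrow> nat" where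
  "dist_set V E v S = Min ((\<lambda>s. dist V E v s) ` S)"

end

theory Submission
  imports Defs
begin

lemma walk_Cons:
  "walk V E (a # q) \<longleftrightarrow> a \<in> V \<and> (q = [] \<or> (E a (hd q) \<and> walk V E q))"
proof (cases q)
  case Nil
  then show ?thesis by (auto simp: walk_def)
next
  case (Cons b r)
  have "(\<forall>j. Suc j < length (a # b # r) \<longrightarrow> E ((a # b # r) ! j) ((a # b # r) ! Suc j))
        \<longleftrightarrow> E a b \<and> (\<forall>j. Suc j < length (b # r) \<longrightarrow> E ((b # r) ! j) ((b # r) ! Suc j))"
    (is "?L \<longleftrightarrow> ?R")
  proof
    assume L: ?L
    have "E a b" using L[rule_format, of 0] by simp
    moreover have "\<forall>j. Suc j < length (b # r) \<longrightarrow> E ((b # r) ! j) ((b # r) ! Suc j)"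
    proof (intro allI impI)
      fix j assume "Suc j < length (b # r)"
      then show "E ((b # r) ! j) ((b # r) ! Suc j)" using L[rule_format, of "Suc j"] by simp
    qed
    ultimately show ?R by blast
  next
    assume R: ?R
    show ?L
    proof (intro allI impI)
      fix j assume j: "Suc j < length (a # b # r)"
      show "E ((a # b # r) ! j) ((a # b # r) ! Suc j)"
      proof (cases j)
        case 0 then show ?thesis using R by simp
      next
        case (Suc j') then show ?thesis using R j by auto
      qed
    qed
  qed
  then show ?thesis using Cons by (auto simp: walk_def)
qed

lemma walk_append:
  "walk V E p \<Longrightarrow> walk V E q \<Longrightarrow> last p = hd q \<Longrightarrow> walk V E (p @ tl q)"
proof (induction p)
  case Nil then show ?case by (simp add: walk_def)
next
  case (Cons a p)
  show ?case
  proof (cases p)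
    case Nil
    then show ?thesis using Cons.prems by (cases q) auto
  next
    case (Cons b r)
    have w: "walk V E p" "E a (hd p)" "a \<in> V" using Cons.prems(1) \<open>p = b # r\<close> by (auto simp: walk_Cons)
    have "walk V E (p @ tl q)" using Cons.IH w Cons.prems \<open>p = b # r\<close> by auto
    then show ?thesis using w \<open>p = b # r\<close> by (auto simp: walk_Cons)
  qed
qed

lemma walk_rev:
  assumes sym: "\<forall>x y. E x y \<longrightarrow> E y x" and w: "walk V E p"
  shows "walk V E (rev p)"
proof -
  have "E (rev p ! j) (rev p ! Suc j)" if j: "Suc j < length (rev p)" for j
  proof -
    let ?n = "length p"
    have a: "rev p ! j = p ! (?n - Suc j)" using j by (simp add: rev_nth)
    have b: "rev p ! Suc j = p ! (?n - Suc (Suc j))" using j by (simp add: rev_nth)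
    have c: "Suc (?n - Suc (Suc j)) = ?n - Suc j" using j by simp
    have "E (p ! (?n - Suc (Suc j))) (p ! Suc (?n - Suc (Suc j)))"
    proof -
      have "Suc (?n - Suc (Suc j)) < ?n" using j by simp
      then show ?thesis using w unfolding walk_def by blast
    qed
    then show ?thesis using a b c sym by metis
  qed
  then show ?thesis using w by (auto simp: walk_def)
qed

lemma walk_butlast:
  assumes "walk V E p" "length p \<ge> 2"
  shows "walk V E (butlast p)"
proof -
  have "butlast p \<noteq> []" using assms(2) by (cases p) auto
  moreover have "set (butlast p) \<subseteq> V" using assms(1) unfolding walk_def by (meson in_set_butlastD subset_iff)
  moreover have "E (butlast p ! j) (butlast p ! Suc j)" if "Suc j < length (butlast p)" for j
    using assms(1) that unfolding walk_def by (simp add: nth_butlast)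
  ultimately show ?thesis unfolding walk_def by blast
qed

lemma dist_le:
  assumes "walk V E p" "hd p = u" "last p = v"
  shows "dist V E u v \<le> length p - 1"
proof -
  have "length p = Suc (length p - 1)" using assms(1) by (cases p) (auto simp: walk_def)
  then show ?thesis unfolding dist_def using assms by (metis (mono_tags, lifting) Least_le)
qed

lemma dist_ex:
  assumes "connected_graph V E" "u \<in> V" "v \<in> V"
  shows "\<exists>p. walk V E p \<and> hd p = u \<and> last p = v \<and> length p = Suc (dist V E u v)"
proof -
  obtain p where p: "walk V E p" "hd p = u" "last p = v"
    using assms unfolding connected_graph_def by blast
  have "length p = Suc (length p - 1)" using p(1) by (cases p) (auto simp: walk_def)
  then have "\<exists>n p. walk V E p \<and> hd p = u \<and> last p = v \<and> length p = Suc n" using p by blast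
  then show ?thesis unfolding dist_def by (rule LeastI_ex)
qed

lemma dist_sym:
  assumes "simple_graph V E" "connected_graph V E" "u \<in> V" "v \<in> V"
  shows "dist V E u v = dist V E v u"
proof -
  have sym: "\<forall>x y. E x y \<longrightarrow> E y x" using assms(1) by (simp add: simple_graph_def)
  have le: "dist V E a b \<le> dist V E b a" if aV: "a \<in> V" and bV: "b \<in> V" for a b
  proof -
    obtain p where p: "walk V E p" "hd p = b" "last p = a" "length p = Suc (dist V E b a)"
      using dist_ex[OF assms(2) bV aV] by blast
    have "walk V E (rev p)" using walk_rev[OF sym p(1)] .
    moreover have "hd (rev p) = a" "last (rev p) = b" using p p(1)
      by (auto simp: walk_def hd_rev last_rev)
    ultimately show ?thesis using dist_le p(4) by fastforce
  qed
  show ?thesis using le[of u v] le[of v u] assms by simp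
qed

lemma dist_tri:
  assumes "connected_graph V E" "u \<in> V" "w \<in> V" "x \<in> V"
  shows "dist V E u x \<le> dist V E u w + dist V E w x"
proof -
  obtain p where p: "walk V E p" "hd p = u" "last p = w" "length p = Suc (dist V E u w)"
    using dist_ex[OF assms(1,2,3)] by blast
  obtain q where q: "walk V E q" "hd q = w" "last q = x" "length q = Suc (dist V E w x)"
    using dist_ex[OF assms(1,3,4)] by blast
  have "walk V E (p @ tl q)" using walk_append p q by metis
  moreover have "hd (p @ tl q) = u" using p by (cases p) (auto simp: walk_def)
  moreover have "last (p @ tl q) = x" using q p
    by (cases q; cases "tl q") (auto simp: walk_def)
  ultimately have "dist V E u x \<le> length (p @ tl q) - 1" using dist_le by metis
  then show ?thesis using p q by simp
qed

lemma dist_edge: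
  assumes "E a b" "a \<in> V" "b \<in> V"
  shows "dist V E a b \<le> 1"
proof -
  have "walk V E [a, b]" using assms by (auto simp: walk_Cons)
  then show ?thesis using dist_le[of V E "[a,b]" a b] by simp
qed

lemma dist_zero:
  assumes "connected_graph V E" "a \<in> V" "b \<in> V" "dist V E a b = 0"
  shows "a = b"
proof -
  obtain p where p: "walk V E p" "hd p = a" "last p = b" "length p = Suc 0"
    using dist_ex[OF assms(1,2,3)] assms(4) by auto
  then show ?thesis by (cases p) auto
qed

theorem lemma8:
  fixes V :: "'a set" and E :: "'a \<Rightarrow> 'a \<Rightarrow> bool" and i k :: nat
  assumes "simple_graph V E" and "connected_graph V E"
    and "alpha_metric i V E"
    and "k > 0"
    and "v \<in> V" and "ecc V E v \<le> rad V E + k"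
  shows "dist_set V E v (center V E) \<le> k + i"
proof -
  note G = assms(1) assms(2)
  have fin: "finite V" "V \<noteq> {}" and irr: "\<forall>x. \<not> E x x"
    and inV: "\<forall>x y. E x y \<longrightarrow> x \<in> V \<and> y \<in> V"
    using assms(1) by (auto simp: simple_graph_def)
  have ecc_ge: "dist V E u y \<le> ecc V E y" if "u \<in> V" for u y
    unfolding ecc_def using fin that by (intro Max_ge) auto
  have ecc_ex: "\<exists>u\<in>V. dist V E u y = ecc V E y" for y
  proof -
    have "ecc V E y \<in> (\<lambda>u. dist V E u y) ` V" unfolding ecc_def using fin by (intro Max_in) auto
    then show ?thesis by force
  qed
  have rad_le: "rad V E \<le> ecc V E y" if "y \<in> V" for y
    unfolding rad_def using fin that by (intro Min_le) auto
  have "rad V E \<in> ecc V E ` V" unfolding rad_def using fin by (intro Min_in) auto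
  then have Cne: "center V E \<noteq> {}" unfolding center_def by auto
  have Cfin: "finite (center V E)" using fin unfolding center_def by auto
  have CV: "center V E \<subseteq> V" unfolding center_def by auto
  have "dist_set V E v (center V E) \<in> (\<lambda>s. dist V E v s) ` center V E"
    unfolding dist_set_def using Cfin Cne by (intro Min_in) auto
  then obtain c where c: "c \<in> center V E" and dc: "dist V E v c = dist_set V E v (center V E)"
    by force
  have dmin: "dist V E v c \<le> dist V E v s" if "s \<in> center V E" for s
    unfolding dc dist_set_def using Cfin that by (intro Min_le) auto
  have cV: "c \<in> V" using c CV by auto
  define d where "d = dist V E v c"
  show ?thesis
  proof (cases "d = 0")
    case True then show ?thesis using dc d_def by simp
  next
    case False
    obtain p where p: "walk V E p" "hd p = v" "last p = c" "length p = Suc d"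
      using dist_ex[OF assms(2) assms(5) cV] d_def by blast
    define w where "w = last (butlast p)"
    have len2: "length p \<ge> 2" using p(4) False by simp
    have wb: "walk V E (butlast p)" using walk_butlast[OF p(1) len2] .
    have bne: "butlast p \<noteq> []" using len2 by (cases p) auto
    have wV: "w \<in> V" using wb bne unfolding w_def walk_def by auto
    have hdb: "hd (butlast p) = v" using p(2) len2 by (cases p) auto
    have lenb: "length (butlast p) = d" using p(4) by simp
    have dvw1: "dist V E v w \<le> d - 1" using dist_le[OF wb hdb] lenb unfolding w_def by simp
    have wpos: "w = p ! (d - 1)" unfolding w_def using bne lenb False
      by (simp add: last_conv_nth nth_butlast)
    have pne: "p \<noteq> []" using p(4) by auto
    have cpos: "c = p ! d" using p(3) p(4) pne by (simp add: last_conv_nth)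
    have Ewc: "E w c" using p(1) p(4) False unfolding walk_def wpos cpos
      by (metis Suc_pred' lessI neq0_conv)
    have dwc1: "dist V E w c \<le> 1" using dist_edge[of E w c V] Ewc wV cV by blast
    have "w \<noteq> c" using Ewc irr by auto
    then have dwc: "dist V E w c = 1" using dwc1 dist_zero[OF assms(2) wV cV] by fastforce
    have "d \<le> dist V E v w + dist V E w c" using dist_tri[OF assms(2) assms(5) wV cV] d_def by simp
    then have dvw: "dist V E v w = d - 1" using dvw1 dwc by simp
    have "w \<notin> center V E"
    proof
      assume "w \<in> center V E"
      then have "d \<le> dist V E v w" using dmin d_def by simp
      then show False using dvw False by simp
    qed
    then have eccw: "ecc V E w \<ge> rad V E + 1" using rad_le[OF wV] wV unfolding center_def by auto
    obtain x where xV: "x \<in> V" and dxw: "dist V E x w = ecc V E w" using ecc_ex by blast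
    have eccc: "ecc V E c = rad V E" using c unfolding center_def by auto
    have dcx: "dist V E c x \<le> rad V E" using ecc_ge[OF xV, of c] eccc dist_sym[OF G cV xV] by simp
    have dwx_le: "dist V E w x \<le> 1 + dist V E c x" using dist_tri[OF assms(2) wV cV xV] dwc by simp
    have dwx: "dist V E w x = dist V E x w" using dist_sym[OF G wV xV] .
    have dwx_eq: "dist V E w x = rad V E + 1" and dcx_eq: "dist V E c x = rad V E"
      using dwx_le dcx eccw dxw dwx by auto
    have I1: "w \<in> interval V E v c" unfolding interval_def using wV dvw dwc d_def False by simp
    have I2: "c \<in> interval V E w x" unfolding interval_def using cV dwc dwx_eq dcx_eq by simp
    have "int (dist V E v x) \<ge> int (dist V E v w) + int (dist V E w x) - int i"
      using assms(3) unfolding alpha_metric_def using assms(5) wV cV xV I1 I2 Ewc by blast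
    moreover have "dist V E v x \<le> ecc V E v"
      using ecc_ge[OF xV, of v] dist_sym[OF G assms(5) xV] by simp
    ultimately show ?thesis using assms(6) dvw dwx_eq False dc d_def by linarith
  qed
qed

end
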